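(* Suppose the sequence $\{\mathcal{G}[k]\}_{k\ge0}$ satisfies the joint strong-connectivity assumption with parameter $T$. Then for every substate $j\in\{1,\dots,N\}$, under the freshness-index rules, $\tau^{(j)}_i[k]\le 2(N-1)T$ for all $k\ge (N-1)T$ and all $i\in\mathcal{V}$ (in particular these indices are finite by the preceding lemma).
   Context: Graphs. Nodes $\mathcal{V}=\{1,\dots,N\}$. At each time $k\in\mathbb{N}=\{0,1,2,\dots\}$ there is a directed graph $\mathcal{G}[k]=(\mathcal{V},\mathcal{E}[k])$; $(i,j)\in\mathcal{E}[k]$ means node $i$ can send information to node $j$ at time $k$. $\mathcal{N}_i[k]=\{l\neq i:(l,i)\in\mathcal{E}[k]\}$ is the set of neighbors of $i$ at time $k$. The union graph over an interval of times has vertex set $\mathcal{V}$ and edge set the union of the edge sets over that interval. Joint strong-connectivity assumption: there is $T\in\mathbb{N}_+=\{1,2,\dots\}$ such that for every $k\in\mathbb{N}$ the union graph over $[kT,(k+1)T)$ is strongly connected. Freshness indices. For each substate index $j\in\{1,\dots,N\}$ (node $j$ being the source node of substate $j$) and node $i$, node $i$ keeps $\tau^{(j)}_i[k]\in\{\omega\}\cup\mathbb{N}$, where $\omega$ is a special symbol. Initialization: $\tau^{(j)}_j[0]=0$, $\tau^{(j)}_i[0]=\omega$ for $i\neq j$. The source keeps $\tau^{(j)}_j[k]=0$ for all $k$. For $i\neq j$, let $\mathcal{M}^{(j)}_i[k]=\{l\in\mathcal{N}_i[k]:\tau^{(j)}_l[k]\neq\omega\}$. Case 1, $\tau^{(j)}_i[k]=\omega$: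 if $\mathcal{M}^{(j)}_i[k]\neq\emptyset$, let $u$ be any minimizer of $\tau^{(j)}_l[k]$ over $l\in\mathcal{M}^{(j)}_i[k]$ and set $\tau^{(j)}_i[k+1]=\tau^{(j)}_u[k]+1$; otherwise set $\tau^{(j)}_i[k+1]=\omega$. Case 2, $\tau^{(j)}_i[k]\neq\omega$: let $\mathcal{F}^{(j)}_i[k]=\{l\in\mathcal{M}^{(j)}_i[k]:\tau^{(j)}_l[k]<\tau^{(j)}_i[k]\}$; if nonempty, let $u$ be any minimizer of $\tau^{(j)}_l[k]$ over $\mathcal{F}^{(j)}_i[k]$ and set $\tau^{(j)}_i[k+1]=\tau^{(j)}_u[k]+1$; otherwise set $\tau^{(j)}_i[k+1]=\tau^{(j)}_i[k]+1$. *)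

theory Defs
  imports Main
begin

text \<open>A time-varying graph is E :: nat => (nat * nat) set,
  where (i,j) \<in> E k means node i can send to node j at time k.
  The special symbol omega is represented by None; a finite index n by Some n.\<close>

definition nodes :: "nat \<Rightarrow> nat set" where
  "nodes N = {1..N}"

definition neighbors :: "(nat \<times> nat) set \<Rightarrow> nat \<Rightarrow> nat set" where
  "neighbors Ek i = {l. l \<noteq> i \<and> (l, i) \<in> Ek}"

definition union_graph :: "(nat \<Rightarrow> (nat \<times> nat) set) \<Rightarrow> nat \<Rightarrow> nat \<Rightarrow> (nat \<times> nat) set" where
  "union_graph E a b = (\<Union>t\<in>{a..<b}. E t)"

definition strongly_connected :: "nat set \<Rightarrow> (nat \<times> nat) set \<Rightarrow> bool" where
  "strongly_connected V A \<longleftrightarrow> (\<forall>a\<in>V. \<forall>b\<in>V. (a, b) \<in> (A \<inter> (V \<times> V))\<^sup>*)"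

definition joint_strongly_connected :: "nat \<Rightarrow> (nat \<Rightarrow> (nat \<times> nat) set) \<Rightarrow> nat \<Rightarrow> bool" where
  "joint_strongly_connected N E T \<longleftrightarrow> T \<ge> 1 \<and>
     (\<forall>k. strongly_connected (nodes N) (union_graph E (k * T) ((k + 1) * T)))"

text \<open>One step of the freshness-index update for substate j. The value of the chosen
  minimizer u is just the minimum, so the rule is deterministic.\<close>
definition fresh_step :: "(nat \<times> nat) set \<Rightarrow> nat \<Rightarrow> (nat \<Rightarrow> nat option) \<Rightarrow> nat \<Rightarrow> nat option" where
  "fresh_step Ek j t i =
     (if i = j then Some 0 else
      (let M = {l \<in> neighbors Ek i. t l \<noteq> None} in
       case t i of
         None \<Rightarrow> (if M = {} then None
                  else Some ((LEAST n. \<exists>l\<in>M. t l = Some n) + 1))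
       | Some c \<Rightarrow>
           (let F = {l \<in> M. the (t l) < c} in
            if F = {} then Some (c + 1)
            else Some ((LEAST n. \<exists>l\<in>F. t l = Some n) + 1))))"

primrec tau :: "(nat \<Rightarrow> (nat \<times> nat) set) \<Rightarrow> nat \<Rightarrow> nat \<Rightarrow> nat \<Rightarrow> nat option" where
  "tau E j 0 = (\<lambda>i. if i = j then Some 0 else None)"
| "tau E j (Suc k) = fresh_step (E k) j (tau E j k)"

end

theory Submission
  imports Defs
begin

lemma fs_src: "fresh_step Ek j t j = Some 0"
  by (simp add: fresh_step_def)

lemma fs_some:
  assumes "i \<noteq> j" "t i = Some c"
  shows "fresh_step Ek j t i = (let F = {l \<in> {l \<in> neighbors Ek i. t l \<noteq> None}. the (t l) < c} in
     if F = {} then Some (c + 1) else Some ((LEAST n. \<exists>l\<in>F. t l = Some n) + 1))"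
  unfolding fresh_step_def by (simp only: assms if_False option.case Let_def)

lemma fs_self:
  assumes "i \<noteq> j" "t i = Some c"
  shows "\<exists>n. fresh_step Ek j t i = Some n \<and> n \<le> c + 1"
proof -
  define M where "M = {l \<in> neighbors Ek i. t l \<noteq> None}"
  define F where "F = {l \<in> M. the (t l) < c}"
  show ?thesis
  proof (cases "F = {}")
    case True
    then have "fresh_step Ek j t i = Some (c + 1)" using assms
      unfolding fs_some[where t=t and Ek=Ek, OF assms(1) assms(2)] Let_def M_def[symmetric] F_def[symmetric] by simp
    then show ?thesis by simp
  next
    case False
    then obtain l where l: "l \<in> F" by blast
    then obtain d where d: "t l = Some d" "d < c" unfolding F_def M_def by auto
    have "(LEAST n. \<exists>l\<in>F. t l = Some n) \<le> d" using l d by (intro Least_le) blast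
    moreover have "fresh_step Ek j t i = Some ((LEAST n. \<exists>l\<in>F. t l = Some n) + 1)" using assms False
      unfolding fs_some[where t=t and Ek=Ek, OF assms(1) assms(2)] Let_def M_def[symmetric] F_def[symmetric] by simp
    ultimately show ?thesis using d by simp
  qed
qed

lemma fs_nb:
  assumes "i \<noteq> j" "l \<in> neighbors Ek i" "t l = Some c"
  shows "\<exists>n. fresh_step Ek j t i = Some n \<and> n \<le> c + 1"
proof -
  define M where "M = {l \<in> neighbors Ek i. t l \<noteq> None}"
  have lM: "l \<in> M" using assms by (simp add: M_def)
  show ?thesis
  proof (cases "t i")
    case None
    have "(LEAST n. \<exists>l\<in>M. t l = Some n) \<le> c" using lM assms by (intro Least_le) blast
    moreover have "fresh_step Ek j t i = Some ((LEAST n. \<exists>l\<in>M. t l = Some n) + 1)"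
      using assms None lM unfolding fresh_step_def Let_def M_def[symmetric] by auto
    ultimately show ?thesis by auto
  next
    case (Some c')
    define F where "F = {l \<in> M. the (t l) < c'}"
    show ?thesis
    proof (cases "F = {}")
      case True
      then have "c' \<le> c" using lM assms(3) unfolding F_def by auto
      moreover have "fresh_step Ek j t i = Some (c' + 1)" using assms Some True
        unfolding fs_some[where t=t and Ek=Ek, OF assms(1) Some] Let_def M_def[symmetric] F_def[symmetric] by simp
      ultimately show ?thesis by simp
    next
      case False
      then obtain l' where l: "l' \<in> F" by blast
      then obtain d where d: "t l' = Some d" "d < c'" unfolding F_def M_def by auto
      have le: "(LEAST n. \<exists>l\<in>F. t l = Some n) \<le> d" using l d by (intro Least_le) blast
      have "(LEAST n. \<exists>l\<in>F. t l = Some n) \<le> c"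
      proof (cases "l \<in> F")
        case True
        then show ?thesis using assms(3) by (intro Least_le) blast
      next
        case False
        then have "c' \<le> c" using lM assms(3) unfolding F_def by auto
        then show ?thesis using le d by linarith
      qed
      moreover have "fresh_step Ek j t i = Some ((LEAST n. \<exists>l\<in>F. t l = Some n) + 1)" using assms False Some
        unfolding fs_some[where t=t and Ek=Ek, OF assms(1) Some] Let_def M_def[symmetric] F_def[symmetric] by simp
      ultimately show ?thesis by simp
    qed
  qed
qed

definition good :: "(nat \<Rightarrow> (nat \<times> nat) set) \<Rightarrow> nat \<Rightarrow> nat \<Rightarrow> nat \<Rightarrow> nat \<Rightarrow> bool" where
  "good E j t s i \<longleftrightarrow> (\<exists>n. tau E j t i = Some n \<and> n + s \<le> t)"

lemma tau_src: "tau E j t j = Some 0"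
  by (cases t) (auto simp: fs_src)

lemma good_src: "s \<le> t \<Longrightarrow> good E j t s j"
  by (simp add: good_def tau_src)

lemma good_step: "good E j t s i \<Longrightarrow> good E j (Suc t) s i"
proof -
  assume g: "good E j t s i"
  then obtain n where n: "tau E j t i = Some n" "n + s \<le> t" by (auto simp: good_def)
  show ?thesis
  proof (cases "i = j")
    case True then show ?thesis using n good_src[of s "Suc t" E j] by simp
  next
    case False
    from fs_self[where t="tau E j t" and Ek="E t", OF False n(1)] obtain m where "fresh_step (E t) j (tau E j t) i = Some m" "m \<le> n + 1"
      by blast
    then show ?thesis using n by (auto simp: good_def)
  qed
qed

lemma good_mono: assumes "good E j t s i" "t \<le> t'" shows "good E j t' s i"
  using assms(2) by (induction rule: dec_induct) (auto intro: good_step assms(1))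

lemma good_edge:
  assumes "good E j t s l" "(l, i) \<in> E t" "l \<noteq> i"
  shows "good E j (Suc t) s i"
proof -
  obtain n where n: "tau E j t l = Some n" "n + s \<le> t" using assms by (auto simp: good_def)
  show ?thesis
  proof (cases "i = j")
    case True then show ?thesis using n good_src[of s "Suc t" E j] by simp
  next
    case False
    have "l \<in> neighbors (E t) i" using assms by (simp add: neighbors_def)
    from fs_nb[where t="tau E j t", OF False this n(1)] obtain m where "fresh_step (E t) j (tau E j t) i = Some m" "m \<le> n + 1"
      by blast
    then show ?thesis using n by (auto simp: good_def)
  qed
qed

lemma cross:
  assumes "(x, y) \<in> r\<^sup>*" "x \<in> S" "y \<notin> S"
  shows "\<exists>u v. (u, v) \<in> r \<and> u \<in> S \<and> v \<notin> S"
  using assms by (induction rule: rtrancl_induct) auto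

lemma windows:
  assumes conn: "joint_strongly_connected N E T" and j: "j \<in> nodes N"
  shows "min N (Suc p) \<le> card {i \<in> nodes N. good E j ((a + p) * T) (a * T) i}"
proof (induction p)
  case 0
  define S where "S = {i \<in> nodes N. good E j ((a + 0) * T) (a * T) i}"
  have jS: "j \<in> S" using j unfolding S_def by (simp add: good_src)
  have fS: "finite S" unfolding S_def nodes_def by simp
  have "S \<noteq> {}" using jS by blast
  then have "0 < card S" using fS by (simp add: card_gt_0_iff)
  then have "1 \<le> card S" by simp
  then show ?case unfolding S_def by simp
next
  case (Suc p)
  define t0 where "t0 = (a + p) * T"
  define t1 where "t1 = (a + Suc p) * T"
  have T1: "T \<ge> 1" using conn by (simp add: joint_strongly_connected_def)
  have t01: "t0 \<le> t1" unfolding t0_def t1_def by simp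
  define R0 where "R0 = {i \<in> nodes N. good E j t0 (a * T) i}"
  define R1 where "R1 = {i \<in> nodes N. good E j t1 (a * T) i}"
  have fin: "finite (nodes N)" by (simp add: nodes_def)
  have sub: "R0 \<subseteq> R1" unfolding R0_def R1_def using good_mono[OF _ t01] by blast
  have R1s: "R1 \<subseteq> nodes N" unfolding R1_def by blast
  show ?case
  proof (cases "R0 = nodes N")
    case True
    then have "R1 = nodes N" using sub R1s by blast
    then have "card R1 = N" by (simp add: nodes_def)
    then show ?thesis unfolding R1_def t1_def by simp
  next
    case False
    then obtain b where b: "b \<in> nodes N" "b \<notin> R0" unfolding R0_def by blast
    have jR0: "j \<in> R0" unfolding R0_def t0_def using j by (simp add: good_src)

    have "strongly_connected (nodes N) (union_graph E ((a + p) * T) ((a + p + 1) * T))"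
      using conn by (simp add: joint_strongly_connected_def)
    then have "(j, b) \<in> (union_graph E t0 t1 \<inter> (nodes N \<times> nodes N))\<^sup>*"
      using j b unfolding strongly_connected_def t0_def t1_def by simp
    from cross[OF this jR0 b(2)] obtain u v where uv:
      "(u, v) \<in> union_graph E t0 t1" "u \<in> nodes N" "v \<in> nodes N" "u \<in> R0" "v \<notin> R0" by blast
    then obtain t where t: "t0 \<le> t" "t < t1" "(u, v) \<in> E t" by (auto simp: union_graph_def)
    have "u \<noteq> v" using uv by blast
    have "good E j t (a * T) u" using uv(4) good_mono[OF _ t(1)] unfolding R0_def by blast
    then have "good E j (Suc t) (a * T) v" using good_edge t(3) \<open>u \<noteq> v\<close> by blast
    then have "good E j t1 (a * T) v" using good_mono[OF _ Suc_leI[OF t(2)]] by blast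
    then have "v \<in> R1" using uv(3) unfolding R1_def by blast
    then have "insert v R0 \<subseteq> R1" using sub by blast
    moreover have "finite R1" using R1s fin finite_subset by blast
    ultimately have "card (insert v R0) \<le> card R1" by (rule card_mono[rotated])
    moreover have "card (insert v R0) = Suc (card R0)"
      using uv(5) R0_def fin by simp
    ultimately have "Suc (card R0) \<le> card R1" by simp
    then show ?thesis using Suc.IH unfolding R0_def R1_def t0_def t1_def by simp
  qed
qed

theorem lemma5:
  fixes N T :: nat and E :: "nat \<Rightarrow> (nat \<times> nat) set"
  assumes graph: "\<forall>k. E k \<subseteq> nodes N \<times> nodes N"
    and conn: "joint_strongly_connected N E T"
  shows "\<forall>j\<in>nodes N. \<forall>i\<in>nodes N. \<forall>k\<ge>(N - 1) * T.
           \<exists>n. tau E j k i = Some n \<and> n \<le> 2 * (N - 1) * T"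
proof (intro ballI allI impI)
  fix j i k assume j: "j \<in> nodes N" and i: "i \<in> nodes N" and k: "(N - 1) * T \<le> k"
  show "\<exists>n. tau E j k i = Some n \<and> n \<le> 2 * (N - 1) * T"
  proof (cases "i = j")
    case True then show ?thesis by (simp add: tau_src)
  next
    case False
    have N2: "N \<ge> 2" using i j False by (auto simp: nodes_def)
    have T1: "T \<ge> 1" using conn by (simp add: joint_strongly_connected_def)
    define q where "q = k div T"
    define r where "r = k mod T"
    have kqr: "k = q * T + r" unfolding q_def r_def by simp
    have rT: "r < T" unfolding r_def using T1 by simp
    have "(N - 1) * T div T \<le> k div T" using k by (rule div_le_mono)
    then have qN: "N - 1 \<le> q" using T1 unfolding q_def by simp
    define a where "a = q - (N - 1)"
    have aq: "a + (N - 1) = q" using qN unfolding a_def by simp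
    define R where "R = {i \<in> nodes N. good E j ((a + (N - 1)) * T) (a * T) i}"
    have "min N (Suc (N - 1)) \<le> card R" unfolding R_def by (rule windows[OF conn j])
    then have cR: "N \<le> card R" using N2 by simp
    have fin: "finite (nodes N)" by (simp add: nodes_def)
    have cn: "card (nodes N) = N" by (simp add: nodes_def)
    have "R \<subseteq> nodes N" unfolding R_def by blast
    then have "R = nodes N" using cR cn fin by (intro card_seteq) simp_all
    then have g: "good E j (q * T) (a * T) i" using i aq unfolding R_def by auto
    have "q * T \<le> k" using kqr by simp
    then have "good E j k (a * T) i" using good_mono[OF g] by blast
    then obtain n where n: "tau E j k i = Some n" "n + a * T \<le> k" by (auto simp: good_def)
    have "a * T + (N - 1) * T = q * T" using aq add_mult_distrib[of a "N - 1" T] by simp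
    then have "n + q * T \<le> q * T + r + (N - 1) * T" using n(2) kqr by linarith
    then have "n \<le> r + (N - 1) * T" by linarith
    moreover have "T \<le> (N - 1) * T" using N2 by (simp add: Suc_le_eq)
    moreover have "2 * (N - 1) * T = (N - 1) * T + (N - 1) * T" by simp
    ultimately have "n \<le> 2 * (N - 1) * T" using rT by linarith
    then show ?thesis using n(1) by simp
  qed
qed

end
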